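(* Let $N\ge 1$ and $k\ge 1$ be integers, let $q^{(k)}_1,\ldots,q^{(k)}_{N^k}\in\Delta^{N}$ be arbitrary, and let $\mathcal{Q}^{(k)}:=\left(q^{(k)}_1,\ldots,q^{(k)}_{N^k}\right)$. For $i\in\{1,\ldots,N^{k-1}\}$ set $$Q^{(k)}_i:=\left(q^{(k)}_{N(i-1)+1},\,q^{(k)}_{N(i-1)+2},\,\ldots,\,q^{(k)}_{N(i-1)+N}\right)\in\mathbb{R}^{N\times N},$$ and let $$Q^{(k)}:=C_{N,N^{k-1}}\sum_{i=1}^{N^{k-1}}E_{N^{k-1},i}\otimes Q^{(k)}_i\in\mathbb{R}^{N^k\times N^k}$$ be the corresponding $k^{\text{th}}$ order transition matrix. Then $$Q^{(k)}=M^{(k)}_{k}\,C^{(k+1)}_{1}\,B^{(k)}_{k}\left(\mathcal{Q}^{(k)}\right)=C^{(k)}_{1}\,M^{(k)}_{k-1}\,B^{(k)}_{k}\left(\mathcal{Q}^{(k)}\right).$$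
   Context: $\Delta^{n}$ denotes the set of probability vectors in $\mathbb{R}^n$ (column vectors with nonnegative entries summing to $1$). $E_n$ is the $n\times n$ identity matrix, $e_{n,i}$ the $i$-th standard basis column vector of $\mathbb{R}^n$, $E_{n,i}:=e_{n,i}e_{n,i}^{T}$, $\mathbf{1}_n\in\mathbb{R}^n$ the all-ones vector, and $\otimes$ the Kronecker product. The commutation matrix is $C_{n,m}:=\sum_{i=1}^{m}e_{m,i}^{T}\otimes E_n\otimes e_{m,i}$ (an $nm\times nm$ permutation matrix). For integers $k\ge 0$ and $0\le m\le k$ (with $N$ fixed): the marginalization matrix is $M^{(k)}_m:=E_{N^m}\otimes\mathbf{1}_N^{T}\otimes E_{N^{k-m}}\in\mathbb{R}^{N^k\times N^{k+1}}$; for a tuple $\mathcal{Q}=(q_1,\ldots,q_{N^k})$ of vectors in $\Delta^N$, the branching matrix is $B^{(k)}_m(\mathcal{Q}):=\sum_{i=1}^{N^m}\sum_{j=1}^{N^{k-m}}E_{N^m,i}\otimes q_{N^{k-m}(i-1)+j}\otimes E_{N^{k-m},j}\in\mathbb{R}^{N^{k+1}\times N^k}$; the cycling matrix is $C^{(k)}_m:=C_{N^m,N^{k-m}}$. *)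

theory Defs
  imports "Jordan_Normal_Form.Matrix"
begin

text \<open>All indices are 0-based: the paper's index i in {1..n} corresponds to i-1 here.\<close>

definition kron :: "real mat \<Rightarrow> real mat \<Rightarrow> real mat" (infixl "\<otimes>\<^sub>k" 70) where
  "kron A B = mat (dim_row A * dim_row B) (dim_col A * dim_col B)
     (\<lambda>(i,j). A $$ (i div dim_row B, j div dim_col B) * B $$ (i mod dim_row B, j mod dim_col B))"

fun msum :: "nat \<Rightarrow> nat \<Rightarrow> (nat \<Rightarrow> real mat) \<Rightarrow> nat \<Rightarrow> real mat" where
  "msum r c f 0 = 0\<^sub>m r c"
| "msum r c f (Suc n) = msum r c f n + f n"

definition colm :: "real vec \<Rightarrow> real mat" where
  "colm v = mat (dim_vec v) 1 (\<lambda>(i,j). v $ i)"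

definition ebasis :: "nat \<Rightarrow> nat \<Rightarrow> real mat" where
  "ebasis n i = mat n 1 (\<lambda>(r,c). if r = i then 1 else 0)"

definition Eunit :: "nat \<Rightarrow> nat \<Rightarrow> real mat" where
  "Eunit n i = ebasis n i * transpose_mat (ebasis n i)"

definition ones :: "nat \<Rightarrow> real mat" where
  "ones n = mat n 1 (\<lambda>_. 1)"

definition prob_vec :: "nat \<Rightarrow> real vec \<Rightarrow> bool" where
  "prob_vec n v \<longleftrightarrow> dim_vec v = n \<and> (\<forall>j<n. v $ j \<ge> 0) \<and> (\<Sum>j<n. v $ j) = 1"

definition commutation :: "nat \<Rightarrow> nat \<Rightarrow> real mat" where
  "commutation n m = msum (n*m) (n*m)
     (\<lambda>i. transpose_mat (ebasis m i) \<otimes>\<^sub>k 1\<^sub>m n \<otimes>\<^sub>k ebasis m i) m"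

definition marg :: "nat \<Rightarrow> nat \<Rightarrow> nat \<Rightarrow> real mat" where
  "marg N k m = 1\<^sub>m (N^m) \<otimes>\<^sub>k transpose_mat (ones N) \<otimes>\<^sub>k 1\<^sub>m (N^(k-m))"

definition branch :: "nat \<Rightarrow> nat \<Rightarrow> nat \<Rightarrow> (nat \<Rightarrow> real vec) \<Rightarrow> real mat" where
  "branch N k m q = msum (N^(k+1)) (N^k)
     (\<lambda>i. msum (N^(k+1)) (N^k)
        (\<lambda>j. Eunit (N^m) i \<otimes>\<^sub>k colm (q (N^(k-m) * i + j)) \<otimes>\<^sub>k Eunit (N^(k-m)) j) (N^(k-m))) (N^m)"

definition cyc :: "nat \<Rightarrow> nat \<Rightarrow> nat \<Rightarrow> real mat" where
  "cyc N k m = commutation (N^m) (N^(k-m))"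

definition Qblock :: "nat \<Rightarrow> (nat \<Rightarrow> real vec) \<Rightarrow> nat \<Rightarrow> real mat" where
  "Qblock N q i = mat N N (\<lambda>(r,c). q (N * i + c) $ r)"

definition trans_mat_k :: "nat \<Rightarrow> nat \<Rightarrow> (nat \<Rightarrow> real vec) \<Rightarrow> real mat" where
  "trans_mat_k N k q = commutation N (N^(k-1)) *
     msum (N^k) (N^k) (\<lambda>i. Eunit (N^(k-1)) i \<otimes>\<^sub>k Qblock N q i) (N^(k-1))"

end

theory Submission imports Defs begin

lemma kron_dims[simp]: "dim_row (A \<otimes>\<^sub>k B) = dim_row A * dim_row B" "dim_col (A \<otimes>\<^sub>k B) = dim_col A * dim_col B"
  by (simp_all add: kron_def)

lemma kron_index: "i < dim_row A * dim_row B \<Longrightarrow> j < dim_col A * dim_col B \<Longrightarrow>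
  (A \<otimes>\<^sub>k B) $$ (i,j) = A $$ (i div dim_row B, j div dim_col B) * B $$ (i mod dim_row B, j mod dim_col B)"
  by (simp add: kron_def)

lemma msum_carrier: "(\<And>t. t < m \<Longrightarrow> f t \<in> carrier_mat r c) \<Longrightarrow> msum r c f m \<in> carrier_mat r c"
proof (induction m)
  case 0 then show ?case by simp
next
  case (Suc m)
  have "f m \<in> carrier_mat r c" using Suc.prems by blast
  then show ?case by simp
qed

lemma msum_index: "(\<And>t. t < m \<Longrightarrow> f t \<in> carrier_mat r c) \<Longrightarrow> i < r \<Longrightarrow> j < c \<Longrightarrow>
   msum r c f m $$ (i,j) = (\<Sum>t<m. f t $$ (i,j))"
proof (induction m)
  case 0 then show ?case by simp
next
  case (Suc m)
  have c2: "f m \<in> carrier_mat r c" using Suc.prems by blast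
  have ih: "msum r c f m $$ (i,j) = (\<Sum>t<m. f t $$ (i,j))"
    using Suc.IH Suc.prems by simp
  have "msum r c f (Suc m) $$ (i,j) = msum r c f m $$ (i,j) + f m $$ (i,j)"
    using c2 Suc.prems(2,3) by (simp del: msum.simps add: msum.simps(2))
  then show ?case using ih by simp
qed

lemma mult_index: "A \<in> carrier_mat r n \<Longrightarrow> B \<in> carrier_mat n c \<Longrightarrow> i < r \<Longrightarrow> j < c \<Longrightarrow>
  (A * B) $$ (i,j) = (\<Sum>t<n. A $$ (i,t) * B $$ (t,j))"
  by (simp add: scalar_prod_def atLeast0LessThan)

lemma sum_unique: "t0 < (n::nat) \<Longrightarrow> (\<And>t. t < n \<Longrightarrow> P t \<longleftrightarrow> t = t0) \<Longrightarrow>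
   (\<Sum>t<n. if P t then f t else (0::real)) = f t0"
proof -
  assume a: "t0 < n" "\<And>t. t < n \<Longrightarrow> P t \<longleftrightarrow> t = t0"
  have "(\<Sum>t<n. if P t then f t else (0::real)) = (\<Sum>t<n. if t = t0 then f t else 0)"
    using a(2) by (intro sum.cong) auto
  also have "\<dots> = f t0" using a(1) by (subst sum.delta) simp_all
  finally show ?thesis .
qed

lemma sum_none: "(\<And>t. t < (n::nat) \<Longrightarrow> \<not> P t) \<Longrightarrow> (\<Sum>t<n. if P t then f t else (0::real)) = 0"
  by simp

lemma ebasis_carrier[simp]: "dim_row (ebasis n i) = n" "dim_col (ebasis n i) = 1"
  by (auto simp: ebasis_def)

lemma ebasis_index[simp]: "r < n \<Longrightarrow> c < 1 \<Longrightarrow> ebasis n i $$ (r,c) = (if r = i then 1 else 0)"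
  by (simp add: ebasis_def)

lemma Eunit_dims[simp]: "dim_row (Eunit n i) = n" "dim_col (Eunit n i) = n"
  by (auto simp: Eunit_def)

lemma Eunit_index[simp]: "r < n \<Longrightarrow> c < n \<Longrightarrow> Eunit n i $$ (r,c) = (if r = i \<and> c = i then 1 else 0)"
  by (simp add: Eunit_def scalar_prod_def)

lemma comm_term:
  assumes ab: "a < n*m" "b < n*m"
  shows "(transpose_mat (ebasis m i) \<otimes>\<^sub>k 1\<^sub>m n \<otimes>\<^sub>k ebasis m i) $$ (a,b) =
     (if a mod m = i \<and> b div n = i \<and> a div m = b mod n then 1 else 0)"
proof -
  have nm0: "n*m \<noteq> 0" using ab by linarith
  have mn: "m > 0" "n > 0" using nm0 by simp_all
  have adm: "a div m < n" using ab(1) by (rule less_mult_imp_div_less)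
  have bdn: "b div n < m" using ab(2) by (metis less_mult_imp_div_less mult.commute)
  have "(transpose_mat (ebasis m i) \<otimes>\<^sub>k 1\<^sub>m n \<otimes>\<^sub>k ebasis m i) $$ (a,b) =
     (transpose_mat (ebasis m i) \<otimes>\<^sub>k 1\<^sub>m n) $$ (a div m, b) * ebasis m i $$ (a mod m, 0)"
    using ab by (subst kron_index) (auto simp: mult_ac)
  also have "(transpose_mat (ebasis m i) \<otimes>\<^sub>k 1\<^sub>m n) $$ (a div m, b) =
      transpose_mat (ebasis m i) $$ (0, b div n) * 1\<^sub>m n $$ (a div m, b mod n)"
    using ab adm by (subst kron_index) (auto simp: mult_ac)
  also have "transpose_mat (ebasis m i) $$ (0, b div n) = (if b div n = i then 1 else 0)"
    using bdn by simp
  also have "1\<^sub>m n $$ (a div m, b mod n) = (if a div m = b mod n then 1 else 0)"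
    using adm mn by simp
  also have "ebasis m i $$ (a mod m, 0) = (if a mod m = i then 1 else 0)"
    using mn by simp
  finally show ?thesis by auto
qed

lemma commutation_closed: "commutation n m = mat (n*m) (n*m)
   (\<lambda>(a,b). if a mod m = b div n \<and> a div m = b mod n then 1 else 0)"
proof -
  have carr: "\<And>i. i < m \<Longrightarrow> transpose_mat (ebasis m i) \<otimes>\<^sub>k 1\<^sub>m n \<otimes>\<^sub>k ebasis m i \<in> carrier_mat (n*m) (n*m)"
    unfolding carrier_mat_def by simp
  show ?thesis unfolding commutation_def
  proof (rule eq_matI)
    fix a b assume a: "a < dim_row (mat (n*m) (n*m) (\<lambda>(a,b). if a mod m = b div n \<and> a div m = b mod n then 1 else (0::real)))"
      and b: "b < dim_col (mat (n*m) (n*m) (\<lambda>(a,b). if a mod m = b div n \<and> a div m = b mod n then 1 else (0::real)))"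
    then have ab: "a < n*m" "b < n*m" by auto
    have mn: "m > 0" using ab by (cases m) simp_all
    have "msum (n*m) (n*m) (\<lambda>i. transpose_mat (ebasis m i) \<otimes>\<^sub>k 1\<^sub>m n \<otimes>\<^sub>k ebasis m i) m $$ (a,b)
      = (\<Sum>i<m. if a mod m = i \<and> b div n = i \<and> a div m = b mod n then 1 else 0)"
      using ab by (simp add: msum_index[OF carr] comm_term)
    also have "\<dots> = (if a mod m = b div n \<and> a div m = b mod n then 1 else 0)"
    proof (cases "a mod m = b div n \<and> a div m = b mod n")
      case True
      have "a mod m < m" using mn by simp
      then show ?thesis using mn True by (subst sum_unique[of "a mod m"]) auto
    next
      case False
      then show ?thesis by (subst sum_none) auto
    qed
    finally show "msum (n*m) (n*m) (\<lambda>i. transpose_mat (ebasis m i) \<otimes>\<^sub>k 1\<^sub>m n \<otimes>\<^sub>k ebasis m i) m $$ (a,b)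
      = mat (n*m) (n*m) (\<lambda>(a,b). if a mod m = b div n \<and> a div m = b mod n then 1 else (0::real)) $$ (a,b)"
      using ab by simp
  qed (auto intro!: carrier_matD[OF msum_carrier[OF carr]])
qed


lemma colm_dims[simp]: "dim_row (colm v) = dim_vec v" "dim_col (colm v) = 1"
  by (simp_all add: colm_def)

lemma colm_index[simp]: "i < dim_vec v \<Longrightarrow> j < 1 \<Longrightarrow> colm v $$ (i,j) = v $ i"
  by (simp add: colm_def)

lemma ones_dims[simp]: "dim_row (ones n) = n" "dim_col (ones n) = 1"
  by (simp_all add: ones_def)

lemma ones_index[simp]: "i < n \<Longrightarrow> j < 1 \<Longrightarrow> ones n $$ (i,j) = 1"
  by (simp add: ones_def)

lemma marg_term:
  assumes N: "N > 0" and s: "s > 0" and a: "a < p*s" and b: "b < p*N*s"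
  shows "(1\<^sub>m p \<otimes>\<^sub>k transpose_mat (ones N) \<otimes>\<^sub>k 1\<^sub>m s) $$ (a,b) =
     (if a div s = b div s div N \<and> a mod s = b mod s then 1 else 0)"
proof -
  have x: "a div s < p" using a by (rule less_mult_imp_div_less)
  have y: "b div s < p*N" using b by (rule less_mult_imp_div_less)
  have yN: "b div s div N < p" using y by (rule less_mult_imp_div_less)
  have "(1\<^sub>m p \<otimes>\<^sub>k transpose_mat (ones N) \<otimes>\<^sub>k 1\<^sub>m s) $$ (a,b) =
     (1\<^sub>m p \<otimes>\<^sub>k transpose_mat (ones N)) $$ (a div s, b div s) * 1\<^sub>m s $$ (a mod s, b mod s)"
    using a b by (subst kron_index) simp_all
  also have "(1\<^sub>m p \<otimes>\<^sub>k transpose_mat (ones N)) $$ (a div s, b div s) =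
     1\<^sub>m p $$ (a div s, b div s div N) * transpose_mat (ones N) $$ (0, b div s mod N)"
    using x y by (subst kron_index) simp_all
  also have "transpose_mat (ones N) $$ (0, b div s mod N) = 1" using N by simp
  also have "1\<^sub>m p $$ (a div s, b div s div N) = (if a div s = b div s div N then 1 else 0)"
    using x yN by simp
  also have "1\<^sub>m s $$ (a mod s, b mod s) = (if a mod s = b mod s then 1 else 0)"
    using s by simp
  finally show ?thesis by simp
qed


lemma sum_if_eq: "(c::nat) < M \<Longrightarrow> (\<Sum>i<M. if P \<and> c = i then X i else (0::real)) = (if P then X c else 0)"
proof (cases P)
  case True
  assume c: "c < M"
  have "(\<Sum>i<M. if P \<and> c = i then X i else (0::real)) = (\<Sum>i<M. if c = i then X i else 0)"
    using True by simp
  also have "\<dots> = X c" using c by (subst sum.delta') simp_all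
  finally show ?thesis using True by simp
next
  case False then show ?thesis by simp
qed

lemma Qblock_index: "r < N \<Longrightarrow> c < N \<Longrightarrow> Qblock N q i $$ (r,c) = q (N*i+c) $ r"
  by (simp add: Qblock_def)

lemma Qblock_dims[simp]: "dim_row (Qblock N q i) = N" "dim_col (Qblock N q i) = N"
  by (simp_all add: Qblock_def)

lemma S_term:
  assumes a: "a < n*N" and b: "b < n*N"
  shows "(Eunit n i \<otimes>\<^sub>k Qblock N q i) $$ (a,b) =
     (if a div N = b div N \<and> b div N = i then q (N*i + b mod N) $ (a mod N) else 0)"
proof -
  have N: "N > 0" using a by (cases N) simp_all
  have x: "a div N < n" using a by (rule less_mult_imp_div_less)
  have y: "b div N < n" using b by (rule less_mult_imp_div_less)
  have "(Eunit n i \<otimes>\<^sub>k Qblock N q i) $$ (a,b) =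
     Eunit n i $$ (a div N, b div N) * Qblock N q i $$ (a mod N, b mod N)"
    using a b by (subst kron_index) simp_all
  also have "Qblock N q i $$ (a mod N, b mod N) = q (N*i + b mod N) $ (a mod N)"
    using N by (simp add: Qblock_index)
  also have "Eunit n i $$ (a div N, b div N) = (if a div N = i \<and> b div N = i then 1 else 0)"
    using x y by simp
  finally show ?thesis by auto
qed

lemma S_closed:
  assumes r: "r = n*N"
  shows "msum r r (\<lambda>i. Eunit n i \<otimes>\<^sub>k Qblock N q i) n =
    mat r r (\<lambda>(a,b). if a div N = b div N then q b $ (a mod N) else 0)"
proof -
  have carr: "\<And>i. i < n \<Longrightarrow> Eunit n i \<otimes>\<^sub>k Qblock N q i \<in> carrier_mat r r"
    unfolding carrier_mat_def using r by simp
  show ?thesis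
  proof (rule eq_matI)
    fix a b assume "a < dim_row (mat r r (\<lambda>(a,b). if a div N = b div N then q b $ (a mod N) else 0))"
      "b < dim_col (mat r r (\<lambda>(a,b). if a div N = b div N then q b $ (a mod N) else 0))"
    then have ab: "a < n*N" "b < n*N" using r by auto
    have y: "b div N < n" using ab(2) by (rule less_mult_imp_div_less)
    have "msum r r (\<lambda>i. Eunit n i \<otimes>\<^sub>k Qblock N q i) n $$ (a,b) =
       (\<Sum>i<n. if a div N = b div N \<and> b div N = i then q (N*i + b mod N) $ (a mod N) else 0)"
      using ab r by (subst msum_index[OF carr]) (simp_all add: S_term)
    also have "\<dots> = (if a div N = b div N then q (N*(b div N) + b mod N) $ (a mod N) else 0)"
      using y by (rule sum_if_eq)
    also have "N*(b div N) + b mod N = b" by simp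
    finally show "msum r r (\<lambda>i. Eunit n i \<otimes>\<^sub>k Qblock N q i) n $$ (a,b) =
       mat r r (\<lambda>(a,b). if a div N = b div N then q b $ (a mod N) else 0) $$ (a,b)"
      using ab r by simp
  qed (auto intro!: carrier_matD[OF msum_carrier[OF carr]])
qed

lemma B_term:
  assumes a: "a < M*N" and c: "c < M" and v: "dim_vec v = N" and j: "j < 1"
  shows "(Eunit M i \<otimes>\<^sub>k colm v \<otimes>\<^sub>k Eunit 1 j) $$ (a,c) =
     (if a div N = i \<and> c = i then v $ (a mod N) else 0)"
proof -
  have N: "N > 0" using a by (cases N) simp_all
  have x: "a div N < M" using a by (rule less_mult_imp_div_less)
  have "(Eunit M i \<otimes>\<^sub>k colm v \<otimes>\<^sub>k Eunit 1 j) $$ (a,c) =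
     (Eunit M i \<otimes>\<^sub>k colm v) $$ (a, c) * Eunit 1 j $$ (0, 0)"
    using a c v by (subst kron_index) simp_all
  also have "Eunit 1 j $$ (0, 0) = 1" using j by simp
  also have "(Eunit M i \<otimes>\<^sub>k colm v) $$ (a, c) = Eunit M i $$ (a div N, c) * colm v $$ (a mod N, 0)"
    using a c v by (subst kron_index) simp_all
  also have "colm v $$ (a mod N, 0) = v $ (a mod N)" using N v by simp
  also have "Eunit M i $$ (a div N, c) = (if a div N = i \<and> c = i then 1 else 0)"
    using x c by simp
  finally show ?thesis by auto
qed

lemma B_closed:
  assumes R: "R = M*N" and v: "\<And>i. i < M \<Longrightarrow> dim_vec (q i) = N"
  shows "msum R M (\<lambda>i. msum R M (\<lambda>j. Eunit M i \<otimes>\<^sub>k colm (q (1*i+j)) \<otimes>\<^sub>k Eunit 1 j) 1) M =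
    mat R M (\<lambda>(a,c). if a div N = c then q c $ (a mod N) else 0)"
proof -
  have carr1: "\<And>i j. i < M \<Longrightarrow> j < 1 \<Longrightarrow> Eunit M i \<otimes>\<^sub>k colm (q (1*i+j)) \<otimes>\<^sub>k Eunit 1 j \<in> carrier_mat R M"
    unfolding carrier_mat_def using R v by simp
  have carr: "\<And>i. i < M \<Longrightarrow> msum R M (\<lambda>j. Eunit M i \<otimes>\<^sub>k colm (q (1*i+j)) \<otimes>\<^sub>k Eunit 1 j) 1 \<in> carrier_mat R M"
    by (rule msum_carrier) (rule carr1)
  have cM: "msum R M (\<lambda>i. msum R M (\<lambda>j. Eunit M i \<otimes>\<^sub>k colm (q (1*i+j)) \<otimes>\<^sub>k Eunit 1 j) 1) M \<in> carrier_mat R M"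
    by (rule msum_carrier) (rule carr)
  show ?thesis
  proof (rule eq_matI)
    fix a c assume "a < dim_row (mat R M (\<lambda>(a,c). if a div N = c then q c $ (a mod N) else 0))"
      "c < dim_col (mat R M (\<lambda>(a,c). if a div N = c then q c $ (a mod N) else 0))"
    then have ac: "a < M*N" "c < M" using R by auto
    have "msum R M (\<lambda>i. msum R M (\<lambda>j. Eunit M i \<otimes>\<^sub>k colm (q (1*i+j)) \<otimes>\<^sub>k Eunit 1 j) 1) M $$ (a,c) =
       (\<Sum>i<M. msum R M (\<lambda>j. Eunit M i \<otimes>\<^sub>k colm (q (1*i+j)) \<otimes>\<^sub>k Eunit 1 j) 1 $$ (a,c))"
      using ac R by (subst msum_index[OF carr]) simp_all
    also have "\<dots> = (\<Sum>i<M. if a div N = c \<and> c = i then q c $ (a mod N) else 0)"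
    proof (rule sum.cong[OF refl])
      fix i assume i: "i \<in> {..<M}"
      have "msum R M (\<lambda>j. Eunit M i \<otimes>\<^sub>k colm (q (1*i+j)) \<otimes>\<^sub>k Eunit 1 j) 1 $$ (a,c) =
         (\<Sum>j<1. (Eunit M i \<otimes>\<^sub>k colm (q (1*i+j)) \<otimes>\<^sub>k Eunit 1 j) $$ (a,c))"
        using ac R i by (subst msum_index[OF carr1]) simp_all
      also have "\<dots> = (Eunit M i \<otimes>\<^sub>k colm (q i) \<otimes>\<^sub>k Eunit 1 0) $$ (a,c)" by simp
      also have "\<dots> = (if a div N = i \<and> c = i then q i $ (a mod N) else 0)"
        using ac i v by (subst B_term) simp_all
      finally show "msum R M (\<lambda>j. Eunit M i \<otimes>\<^sub>k colm (q (1*i+j)) \<otimes>\<^sub>k Eunit 1 j) 1 $$ (a,c) =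
         (if a div N = c \<and> c = i then q c $ (a mod N) else 0)" by auto
    qed
    also have "\<dots> = (if a div N = c then q c $ (a mod N) else 0)"
      using ac(2) by (rule sum_if_eq)
    finally show "msum R M (\<lambda>i. msum R M (\<lambda>j. Eunit M i \<otimes>\<^sub>k colm (q (1*i+j)) \<otimes>\<^sub>k Eunit 1 j) 1) M $$ (a,c) =
       mat R M (\<lambda>(a,c). if a div N = c then q c $ (a mod N) else 0) $$ (a,c)"
      using ac R by simp
  qed (simp_all only: carrier_matD[OF cM] dim_row_mat dim_col_mat)
qed


lemma mat_mult_mat: "mat r m f * mat m c g = mat r c (\<lambda>(i,j). \<Sum>t<m. f (i,t) * g (t,j))"
  by (rule eq_matI) (auto simp: scalar_prod_def atLeast0LessThan)

lemma mat_cong': "(\<And>i j. i < r \<Longrightarrow> j < c \<Longrightarrow> f (i,j) = g (i,j)) \<Longrightarrow> mat r c f = mat r c g"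
  by (rule eq_matI) auto

lemma sum_single: "t0 < (m::nat) \<Longrightarrow> (\<And>t. t < m \<Longrightarrow> g t \<noteq> 0 \<Longrightarrow> t = t0) \<Longrightarrow> (\<Sum>t<m. g t) = (g t0::real)"
proof -
  assume a: "t0 < m" "\<And>t. t < m \<Longrightarrow> g t \<noteq> 0 \<Longrightarrow> t = t0"
  have "(\<Sum>t<m. g t) = (\<Sum>t<m. if t = t0 then g t else 0)"
    using a(2) by (intro sum.cong) auto
  also have "\<dots> = g t0" using a(1) by (subst sum.delta) simp_all
  finally show ?thesis .
qed

lemma idx_bound: "x < (n::nat) \<Longrightarrow> y < N \<Longrightarrow> x*N + y < n*N"
proof -
  assume "x < n" "y < N"
  then have "(x+1)*N \<le> n*N" by (intro mult_right_mono) simp_all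
  then show ?thesis using \<open>y < N\<close> by simp
qed

lemma eq1:
  assumes M: "M = N*n" and N: "N > 0" and n: "n > 0"
  shows "mat M M (\<lambda>(a,b). if a mod n = b div N \<and> a div n = b mod N then 1 else 0) *
         mat M M (\<lambda>(a,b). if a div N = b div N then q b $ (a mod N) else 0) =
         mat M M (\<lambda>(a,c). if a mod n = c div N then q c $ (a div n) else (0::real))"
  unfolding mat_mult_mat
proof (rule mat_cong')
  fix a c assume a: "a < M" and c: "c < M"
  have adn: "a div n < N" using a M by (intro less_mult_imp_div_less) simp
  have amn: "a mod n < n" using n by simp
  define t0 where "t0 = (a mod n)*N + a div n"
  have t0: "t0 < M" unfolding t0_def M using idx_bound[OF amn adn] by (simp add: mult.commute)
  have d1: "t0 div N = a mod n" unfolding t0_def using adn N by simp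
  have d2: "t0 mod N = a div n" unfolding t0_def using adn N by simp
  have "(\<Sum>t<M. (if a mod n = t div N \<and> a div n = t mod N then 1 else 0) *
         (if t div N = c div N then q c $ (t mod N) else 0)) =
        (if a mod n = t0 div N \<and> a div n = t0 mod N then 1 else 0) *
         (if t0 div N = c div N then q c $ (t0 mod N) else (0::real))"
  proof (rule sum_single[OF t0])
    fix t assume "t < M" and nz: "(if a mod n = t div N \<and> a div n = t mod N then 1 else 0) *
         (if t div N = c div N then q c $ (t mod N) else 0) \<noteq> (0::real)"
    then have "a mod n = t div N" "a div n = t mod N" by (auto split: if_splits)
    then show "t = t0" unfolding t0_def using div_mult_mod_eq[of t N] by simp
  qed
  also have "\<dots> = (if a mod n = c div N then q c $ (a div n) else 0)"
    using d1 d2 by simp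
  finally show "(\<lambda>(i,j). \<Sum>t<M. (case (i,t) of (a,b) \<Rightarrow> if a mod n = b div N \<and> a div n = b mod N then 1 else 0) *
        (case (t,j) of (a,b) \<Rightarrow> if a div N = b div N then q b $ (a mod N) else 0)) (a,c) =
     (\<lambda>(a,c). if a mod n = c div N then q c $ (a div n) else 0) (a,c)" by simp
qed


lemma eqCB:
  assumes N: "N > 0" and Mp: "M > 0"
  shows "mat (M*N) (M*N) (\<lambda>(x,b). if x mod M = b div N \<and> x div M = b mod N then 1 else 0) *
         mat (M*N) M (\<lambda>(b,c). if b div N = c then q c $ (b mod N) else 0) =
         mat (M*N) M (\<lambda>(x,c). if x mod M = c then q c $ (x div M) else (0::real))"
  unfolding mat_mult_mat
proof (rule mat_cong')
  fix x c assume x: "x < M*N" and c: "c < M"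
  have xdM: "x div M < N" using x by (intro less_mult_imp_div_less) (simp add: mult.commute)
  have xmM: "x mod M < M" using Mp by simp
  define t0 where "t0 = (x mod M)*N + x div M"
  have t0: "t0 < M*N" unfolding t0_def using idx_bound[OF xmM xdM] by simp
  have d1: "t0 div N = x mod M" unfolding t0_def using xdM N by simp
  have d2: "t0 mod N = x div M" unfolding t0_def using xdM N by simp
  have "(\<Sum>t<M*N. (if x mod M = t div N \<and> x div M = t mod N then 1 else 0) *
         (if t div N = c then q c $ (t mod N) else 0)) =
        (if x mod M = t0 div N \<and> x div M = t0 mod N then 1 else 0) *
         (if t0 div N = c then q c $ (t0 mod N) else (0::real))"
  proof (rule sum_single[OF t0])
    fix t assume "t < M*N" and nz: "(if x mod M = t div N \<and> x div M = t mod N then 1 else 0) *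
         (if t div N = c then q c $ (t mod N) else 0) \<noteq> (0::real)"
    then have "x mod M = t div N" "x div M = t mod N" by (auto split: if_splits)
    then show "t = t0" unfolding t0_def using div_mult_mod_eq[of t N] by simp
  qed
  also have "\<dots> = (if x mod M = c then q c $ (x div M) else 0)"
    using d1 d2 by simp
  finally show "(\<lambda>(i,j). \<Sum>t<M*N. (case (i,t) of (x,b) \<Rightarrow> if x mod M = b div N \<and> x div M = b mod N then 1 else 0) *
        (case (t,j) of (b,c) \<Rightarrow> if b div N = c then q c $ (b mod N) else 0)) (x,c) =
     (\<lambda>(x,c). if x mod M = c then q c $ (x div M) else 0) (x,c)" by simp
qed

lemma eqMC:
  assumes M: "M = N*n" and N: "N > 0" and n: "n > 0"
  shows "mat M (M*N) (\<lambda>(a,x). if a = x div N then 1 else 0) *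
         mat (M*N) M (\<lambda>(x,c). if x mod M = c then q c $ (x div M) else 0) =
         mat M M (\<lambda>(a,c). if a mod n = c div N then q c $ (a div n) else (0::real))"
  unfolding mat_mult_mat
proof (rule mat_cong')
  fix a c assume a: "a < M" and c: "c < M"
  have Mp: "M > 0" using a by simp
  have adn: "a div n < N" using a M by (intro less_mult_imp_div_less) simp
  define t0 where "t0 = (a div n)*M + c"
  have t0: "t0 < M*N" unfolding t0_def using idx_bound[OF adn c] by (simp add: mult.commute)
  have d1: "t0 mod M = c" unfolding t0_def using c by simp
  have d2: "t0 div M = a div n" unfolding t0_def using c by simp
  have d3: "t0 div N = (a div n)*n + c div N" unfolding t0_def M using N
    by (simp add: mult.assoc mult.left_commute)
  have "(\<Sum>t<M*N. (if a = t div N then 1 else 0) *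
         (if t mod M = c then q c $ (t div M) else 0)) =
        (if a = t0 div N then 1 else 0) *
         (if t0 mod M = c then q c $ (t0 div M) else (0::real))"
  proof (rule sum_single[OF t0])
    fix t assume "t < M*N" and nz: "(if a = t div N then 1 else 0) *
         (if t mod M = c then q c $ (t div M) else 0) \<noteq> (0::real)"
    then have h: "a = t div N" "t mod M = c" by (auto split: if_splits)
    have "t div M = a div n" unfolding M h(1) by (simp add: div_mult2_eq)
    then show "t = t0" unfolding t0_def using div_mult_mod_eq[of t M] h(2) by simp
  qed
  also have "\<dots> = (if a mod n = c div N then q c $ (a div n) else 0)"
  proof -
    have "(a = (a div n)*n + c div N) \<longleftrightarrow> (a mod n = c div N)"
      using div_mult_mod_eq[of a n] by linarith
    then show ?thesis using d1 d2 d3 by simp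
  qed
  finally show "(\<lambda>(i,j). \<Sum>t<M*N. (case (i,t) of (a,x) \<Rightarrow> if a = x div N then 1 else 0) *
        (case (t,j) of (x,c) \<Rightarrow> if x mod M = c then q c $ (x div M) else 0)) (a,c) =
     (\<lambda>(a,c). if a mod n = c div N then q c $ (a div n) else 0) (a,c)" by simp
qed

lemma eqW:
  assumes N: "N > 0"
  shows "mat M (M*N) (\<lambda>(x,b). if x div N = b div N div N \<and> x mod N = b mod N then 1 else 0) *
         mat (M*N) M (\<lambda>(b,c). if b div N = c then q c $ (b mod N) else 0) =
         mat M M (\<lambda>(a,b). if a div N = b div N then q b $ (a mod N) else (0::real))"
  unfolding mat_mult_mat
proof (rule mat_cong')
  fix x c assume x: "x < M" and c: "c < M"
  have xmN: "x mod N < N" using N by simp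
  define t0 where "t0 = c*N + x mod N"
  have t0: "t0 < M*N" unfolding t0_def using idx_bound[OF c xmN] by simp
  have d1: "t0 div N = c" unfolding t0_def using xmN N by simp
  have d2: "t0 mod N = x mod N" unfolding t0_def using xmN N by simp
  have "(\<Sum>t<M*N. (if x div N = t div N div N \<and> x mod N = t mod N then 1 else 0) *
         (if t div N = c then q c $ (t mod N) else 0)) =
        (if x div N = t0 div N div N \<and> x mod N = t0 mod N then 1 else 0) *
         (if t0 div N = c then q c $ (t0 mod N) else (0::real))"
  proof (rule sum_single[OF t0])
    fix t assume "t < M*N" and nz: "(if x div N = t div N div N \<and> x mod N = t mod N then 1 else 0) *
         (if t div N = c then q c $ (t mod N) else 0) \<noteq> (0::real)"
    then have "t div N = c" "x mod N = t mod N" by (auto split: if_splits)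
    then show "t = t0" unfolding t0_def using div_mult_mod_eq[of t N] by simp
  qed
  also have "\<dots> = (if x div N = c div N then q c $ (x mod N) else 0)"
    using d1 d2 by simp
  finally show "(\<lambda>(i,j). \<Sum>t<M*N. (case (i,t) of (x,b) \<Rightarrow> if x div N = b div N div N \<and> x mod N = b mod N then 1 else 0) *
        (case (t,j) of (b,c) \<Rightarrow> if b div N = c then q c $ (b mod N) else 0)) (x,c) =
     (\<lambda>(a,b). if a div N = b div N then q b $ (a mod N) else 0) (x,c)" by simp
qed


lemma marg_closed:
  assumes N: "N > 0" and s: "s > 0"
  shows "1\<^sub>m p \<otimes>\<^sub>k transpose_mat (ones N) \<otimes>\<^sub>k 1\<^sub>m s =
    mat (p*s) (p*N*s) (\<lambda>(a,b). if a div s = b div s div N \<and> a mod s = b mod s then 1 else 0)"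
proof (rule eq_matI)
  fix a b assume "a < dim_row (mat (p*s) (p*N*s) (\<lambda>(a,b). if a div s = b div s div N \<and> a mod s = b mod s then 1 else (0::real)))"
    "b < dim_col (mat (p*s) (p*N*s) (\<lambda>(a,b). if a div s = b div s div N \<and> a mod s = b mod s then 1 else (0::real)))"
  then have ab: "a < p*s" "b < p*N*s" by auto
  show "(1\<^sub>m p \<otimes>\<^sub>k transpose_mat (ones N) \<otimes>\<^sub>k 1\<^sub>m s) $$ (a,b) =
    mat (p*s) (p*N*s) (\<lambda>(a,b). if a div s = b div s div N \<and> a mod s = b mod s then 1 else 0) $$ (a,b)"
    using marg_term[OF N s ab] ab by simp
qed simp_all

theorem proposition1:
  fixes N k :: nat and q :: "nat \<Rightarrow> real vec"
  assumes "N \<ge> 1" and "k \<ge> 1"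
    and "\<forall>i < N^k. prob_vec N (q i)"
  shows "trans_mat_k N k q = marg N k k * cyc N (k+1) 1 * branch N k k q
       \<and> trans_mat_k N k q = cyc N k 1 * marg N k (k-1) * branch N k k q"
proof -
  obtain K where k: "k = Suc K" using assms(2) by (cases k) auto
  define n where "n = N^K"
  define M where "M = N^k"
  have N: "N > 0" using assms(1) by simp
  have n: "n > 0" unfolding n_def using N by simp
  have Mn: "M = N*n" unfolding M_def n_def k by simp
  have Mn': "M = n*N" using Mn by simp
  have Mp: "M > 0" using Mn N n by simp
  have vq: "\<And>i. i < M \<Longrightarrow> dim_vec (q i) = N" using assms(3) unfolding M_def prob_vec_def by blast
  define R where "R = mat M M (\<lambda>(a,c). if a mod n = c div N then q c $ (a div n) else (0::real))"
  define C1 where "C1 = mat M M (\<lambda>(a,b). if a mod n = b div N \<and> a div n = b mod N then 1 else (0::real))"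
  define Sm where "Sm = mat M M (\<lambda>(a,b). if a div N = b div N then q b $ (a mod N) else (0::real))"
  define Bm where "Bm = mat (M*N) M (\<lambda>(b,c). if b div N = c then q c $ (b mod N) else (0::real))"
  define CM where "CM = mat (M*N) (M*N) (\<lambda>(x,b). if x mod M = b div N \<and> x div M = b mod N then 1 else (0::real))"
  define Mk where "Mk = mat M (M*N) (\<lambda>(a,x). if a = x div N then 1 else (0::real))"
  define Mk1 where "Mk1 = mat M (M*N) (\<lambda>(x,b). if x div N = b div N div N \<and> x mod N = b mod N then 1 else (0::real))"
  have hC1: "commutation N n = C1" unfolding C1_def using commutation_closed[of N n] Mn by simp
  have hS: "msum M M (\<lambda>i. Eunit n i \<otimes>\<^sub>k Qblock N q i) n = Sm" unfolding Sm_def by (rule S_closed[OF Mn'])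
  have hT: "trans_mat_k N k q = commutation N n * msum M M (\<lambda>i. Eunit n i \<otimes>\<^sub>k Qblock N q i) n"
    unfolding trans_mat_k_def M_def n_def k by simp
  have LHS: "trans_mat_k N k q = R"
    unfolding hT hC1 hS C1_def Sm_def R_def by (rule eq1[OF Mn N n])
  have e: "N^(k+1) = M*N" "N^k = M" "N^(k-k) = 1" unfolding M_def by simp_all
  have hB: "branch N k k q = Bm"
  proof -
    have "branch N k k q = msum (M*N) M (\<lambda>i. msum (M*N) M (\<lambda>j. Eunit M i \<otimes>\<^sub>k colm (q (1*i+j)) \<otimes>\<^sub>k Eunit 1 j) 1) M"
      unfolding branch_def e by (rule refl)
    also have "\<dots> = Bm" unfolding Bm_def by (rule B_closed[OF refl vq])
    finally show ?thesis .
  qed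
  have hCM: "cyc N (k+1) 1 = CM"
  proof -
    have "cyc N (k+1) 1 = commutation N M" unfolding cyc_def M_def by simp
    also have "\<dots> = CM" unfolding CM_def commutation_closed by (simp add: mult.commute)
    finally show ?thesis .
  qed
  have hMk: "marg N k k = Mk"
  proof -
    have "marg N k k = 1\<^sub>m M \<otimes>\<^sub>k transpose_mat (ones N) \<otimes>\<^sub>k 1\<^sub>m 1" unfolding marg_def e by simp
    also have "\<dots> = Mk" using marg_closed[of N 1 M] N unfolding Mk_def by simp
    finally show ?thesis .
  qed
  have hC1': "cyc N k 1 = C1" unfolding cyc_def using hC1 by (simp add: k n_def)
  have hMk1: "marg N k (k-1) = Mk1"
  proof -
    have "marg N k (k-1) = 1\<^sub>m n \<otimes>\<^sub>k transpose_mat (ones N) \<otimes>\<^sub>k 1\<^sub>m N" unfolding marg_def n_def k by simp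
    also have "\<dots> = Mk1" unfolding Mk1_def marg_closed[OF N N] using Mn' by simp
    finally show ?thesis .
  qed
  have R1: "marg N k k * cyc N (k+1) 1 * branch N k k q = R"
  proof -
    have "marg N k k * cyc N (k+1) 1 * branch N k k q = Mk * (CM * Bm)"
      unfolding hMk hCM hB Mk_def CM_def Bm_def by (rule assoc_mult_mat) (rule mat_carrier)+
    also have "CM * Bm = mat (M*N) M (\<lambda>(x,c). if x mod M = c then q c $ (x div M) else (0::real))"
      unfolding CM_def Bm_def by (rule eqCB[OF N Mp])
    also have "Mk * \<dots> = R" unfolding Mk_def R_def by (rule eqMC[OF Mn N n])
    finally show ?thesis .
  qed
  have R2: "cyc N k 1 * marg N k (k-1) * branch N k k q = R"
  proof -
    have "cyc N k 1 * marg N k (k-1) * branch N k k q = C1 * (Mk1 * Bm)"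
      unfolding hC1' hMk1 hB C1_def Mk1_def Bm_def by (rule assoc_mult_mat) (rule mat_carrier)+
    also have "Mk1 * Bm = Sm" unfolding Mk1_def Bm_def Sm_def by (rule eqW[OF N])
    also have "C1 * Sm = R" unfolding C1_def Sm_def R_def by (rule eq1[OF Mn N n])
    finally show ?thesis .
  qed
  show ?thesis using LHS R1 R2 by simp
qed

end
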